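(* Let $G=(S,T,\pi)$ be a countable two-person win-lose game such that every set in $\mathcal{B}^1(G)$ is finite, and assume $G$ satisfies one (hence all) of: (1) $\mathcal{B}^1_{\downarrow}(G)$ is ascending-union closed; (2) $\mathcal{B}^1_{\downarrow}(G)$ contains no countable strictly ascending chain; (3) $G$ is LNG-free. Then the suprema below are attained and $$\max_{\mathbf{p}\in\Delta(S)}\inf_{\mathbf{q}\in\Delta(T)}\pi^{\mathrm{mix}}(\mathbf{p},\mathbf{q})=0=\inf_{\mathbf{q}\in\Delta(T)}\max_{\mathbf{p}\in\Delta(S)}\pi^{\mathrm{mix}}(\mathbf{p},\mathbf{q}).$$
   Context: A two-person win-lose game is $G=(S,T,\pi)$ with non-empty $S,T$ and $\pi:S\times T\to\{0,1\}$; countable means $|S|=|T|=\aleph_0$. $\Delta(X)$ is the set of probability distributions on $X$ with at most countable support; $\pi^{\mathrm{mix}}(\mathbf{p},\mathbf{q})=\sum p_sq_t\pi(s,t)$. For $s\in S$, $B_s=\{t:\pi(s,t)=1\}$, $\mathcal{B}^1(G)=\{B_s:s\in S\}$, $\mathcal{B}^1_{\downarrow}(G)=\{A\subseteq T:\exists s,\ A\subseteq B_s\}$. A family $\mathcal{F}$ is ascending-union closed if $A_i\in\mathcal{F}$ with $A_1\subset A_2\subset\cdots$ implies $\bigcup_iA_i\in\mathcal{F}$. $G$ is LNG-free if there are no sequences of distinct $s_1,s_2,\ldots\in S$ and distinct $t_1,t_2,\ldots\in T$ with $\pi(s_i,t_j)=1\iff i\ge j$. *)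

theory Defs
  imports "HOL-Analysis.Analysis" "HOL-Probability.Probability_Mass_Function"
begin

text \<open>A win-lose game is (S, T, pi) with pi :: 'a => 'b => bool (pi s t = True means payoff 1).\<close>

definition countable_game :: "'a set \<Rightarrow> 'b set \<Rightarrow> bool" where
  "countable_game S T \<longleftrightarrow> countable S \<and> infinite S \<and> countable T \<and> infinite T"

definition Delta :: "'a set \<Rightarrow> 'a pmf set" where
  "Delta X = {p. set_pmf p \<subseteq> X}"

definition pi_mix :: "('a \<Rightarrow> 'b \<Rightarrow> bool) \<Rightarrow> 'a pmf \<Rightarrow> 'b pmf \<Rightarrow> real" where
  "pi_mix \<pi> p q = (\<Sum>\<^sub>\<infinity>(s, t)\<in>UNIV. pmf p s * pmf q t * of_bool (\<pi> s t))"

definition win_set :: "'b set \<Rightarrow> ('a \<Rightarrow> 'b \<Rightarrow> bool) \<Rightarrow> 'a \<Rightarrow> 'b set" where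
  "win_set T \<pi> s = {t \<in> T. \<pi> s t}"

definition B1 :: "'a set \<Rightarrow> 'b set \<Rightarrow> ('a \<Rightarrow> 'b \<Rightarrow> bool) \<Rightarrow> 'b set set" where
  "B1 S T \<pi> = win_set T \<pi> ` S"

definition B1_down :: "'a set \<Rightarrow> 'b set \<Rightarrow> ('a \<Rightarrow> 'b \<Rightarrow> bool) \<Rightarrow> 'b set set" where
  "B1_down S T \<pi> = {A. A \<subseteq> T \<and> (\<exists>s\<in>S. A \<subseteq> win_set T \<pi> s)}"

definition ascending_union_closed :: "'b set set \<Rightarrow> bool" where
  "ascending_union_closed F \<longleftrightarrow>
     (\<forall>A :: nat \<Rightarrow> 'b set. (\<forall>i. A i \<in> F) \<and> (\<forall>i. A i \<subset> A (Suc i)) \<longrightarrow> (\<Union>i. A i) \<in> F)"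

definition no_strict_ascending_chain :: "'b set set \<Rightarrow> bool" where
  "no_strict_ascending_chain F \<longleftrightarrow>
     \<not> (\<exists>A :: nat \<Rightarrow> 'b set. (\<forall>i. A i \<in> F) \<and> (\<forall>i. A i \<subset> A (Suc i)))"

definition LNG_free :: "'a set \<Rightarrow> 'b set \<Rightarrow> ('a \<Rightarrow> 'b \<Rightarrow> bool) \<Rightarrow> bool" where
  "LNG_free S T \<pi> \<longleftrightarrow>
     \<not> (\<exists>(s :: nat \<Rightarrow> 'a) (t :: nat \<Rightarrow> 'b). inj s \<and> inj t \<and> range s \<subseteq> S \<and> range t \<subseteq> T \<and>
           (\<forall>i j. \<pi> (s i) (t j) \<longleftrightarrow> i \<ge> j))"

end

theory Submission
  imports Defs
begin

lemma pi_mix_eq: "pi_mix \<pi> p q = measure (pair_pmf p q) {x. \<pi> (fst x) (snd x)}"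
proof -
  have e: "(\<lambda>(s,t). pmf p s * pmf q t * of_bool (\<pi> s t)) = (\<lambda>x. pmf (pair_pmf p q) x * of_bool(\<pi> (fst x) (snd x)))"
    by (auto simp: pmf_pair fun_eq_iff)
  have "pi_mix \<pi> p q = infsum (\<lambda>x. pmf (pair_pmf p q) x * of_bool(\<pi> (fst x) (snd x))) UNIV"
    unfolding pi_mix_def e by simp
  also have "\<dots> = infsum (pmf (pair_pmf p q)) {x. \<pi> (fst x) (snd x)}"
    by (rule infsum_cong_neutral) auto
  also have "\<dots> = infsetsum (pmf (pair_pmf p q)) {x. \<pi> (fst x) (snd x)}"
    by (rule infsetsum_infsum[symmetric]) auto
  also have "\<dots> = measure (pair_pmf p q) {x. \<pi> (fst x) (snd x)}"
    by (simp add: measure_pmf_conv_infsetsum)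
  finally show ?thesis .
qed

lemma pi_mix_nonneg: "pi_mix \<pi> p q \<ge> 0"
  by (simp add: pi_mix_eq)

lemma pi_mix_ret_right: "pi_mix \<pi> p (return_pmf t) = measure p {s. \<pi> s t}"
  by (simp add: pi_mix_eq pair_return_pmf2 vimage_def)

lemma pi_mix_ret_left: "pi_mix \<pi> (return_pmf s) q = measure q {t. \<pi> s t}"
  by (simp add: pi_mix_eq pair_return_pmf1 vimage_def)

lemma pi_mix_le:
  fixes q :: "'b pmf"
  assumes "set_pmf p \<subseteq> S" "\<forall>s\<in>S. measure q {t. \<pi> s t} \<le> c"
  shows "pi_mix \<pi> p q \<le> c"
proof -
  obtain s0 where s0: "s0 \<in> set_pmf p" using set_pmf_not_empty[of p] by blast
  hence c0: "c \<ge> 0" using assms by (meson measure_nonneg order_trans subsetD)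
  have pp: "pair_pmf p q = bind_pmf p (\<lambda>s. map_pmf (Pair s) q)"
    by (simp add: pair_pmf_def map_pmf_def)
  have "emeasure (measure_pmf (pair_pmf p q)) {x. \<pi> (fst x) (snd x)}
        = (\<integral>\<^sup>+s. emeasure (measure_pmf (map_pmf (Pair s) q)) {x. \<pi> (fst x) (snd x)} \<partial>measure_pmf p)"
    unfolding pp by simp
  also have "\<dots> \<le> (\<integral>\<^sup>+s. ennreal c \<partial>measure_pmf p)"
  proof (rule nn_integral_mono_AE)
    show "AE s in measure_pmf p. emeasure (measure_pmf (map_pmf (Pair s) q)) {x. \<pi> (fst x) (snd x)} \<le> ennreal c"
      unfolding AE_measure_pmf_iff
    proof
      fix s assume "s \<in> set_pmf p"
      hence "measure q {t. \<pi> s t} \<le> c" using assms by auto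
      thus "emeasure (measure_pmf (map_pmf (Pair s) q)) {x. \<pi> (fst x) (snd x)} \<le> ennreal c"
        by (simp add: measure_pmf.emeasure_eq_measure vimage_def ennreal_leI)
    qed
  qed
  also have "\<dots> = ennreal c" by (simp add: measure_pmf.emeasure_space_1)
  finally show ?thesis unfolding pi_mix_eq
    using c0 by (simp add: measure_pmf.emeasure_eq_measure)
qed

lemma finite_approx:
  fixes q :: "'b pmf"
  assumes "\<eta> > 0"
  shows "\<exists>K. finite K \<and> measure q (- K) < \<eta>"
proof -
  have sm: "pmf q summable_on UNIV"
    using abs_summable_equivalent[of "pmf q" UNIV] pmf_abs_summable abs_summable_summable
    by blast
  have "infsum (pmf q) UNIV = 1"
    using infsetsum_infsum[of "pmf q" UNIV] measure_pmf_conv_infsetsum[of q UNIV]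
    by (simp add: pmf_abs_summable)
  then obtain F where F: "finite F" "dist (sum (pmf q) F) 1 \<le> \<eta>/2"
    using infsum_finite_approximation[OF sm, of "\<eta>/2"] assms by auto
  have "measure q F = sum (pmf q) F" using F by (simp add: measure_measure_pmf_finite)
  moreover have "measure q (- F) = 1 - measure q F"
    using measure_pmf.prob_compl[of F q] by (simp add: Compl_eq_Diff_UNIV)
  ultimately have "measure q (- F) \<le> \<eta>/2" using F(2) by (simp add: dist_real_def abs_if split: if_splits)
  thus ?thesis using F(1) assms by (intro exI[of _ F]) auto
qed


definition cov :: "'a set \<Rightarrow> 'b set \<Rightarrow> ('a \<Rightarrow> 'b \<Rightarrow> bool) \<Rightarrow> 'b set \<Rightarrow> bool" where
  "cov S T \<pi> F \<longleftrightarrow> (\<exists>s\<in>S. F \<subseteq> win_set T \<pi> s)"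

definition Rel :: "'a set \<Rightarrow> 'b set \<Rightarrow> ('a \<Rightarrow> 'b \<Rightarrow> bool) \<Rightarrow> ('b set \<times> 'b set) set" where
  "Rel S T \<pi> = {(F', F). F \<subset> F' \<and> cov S T \<pi> F'}"

primrec lng_st :: "'b set \<Rightarrow> 'a set \<Rightarrow> 'b set \<Rightarrow> ('a \<Rightarrow> 'b \<Rightarrow> bool) \<Rightarrow> nat \<Rightarrow> 'b set \<times> 'b set" where
  "lng_st C S T \<pi> 0 = ({}, {})"
| "lng_st C S T \<pi> (Suc n) = (let t = (SOME t. t \<in> C - snd (lng_st C S T \<pi> n));
      s = (SOME s. s \<in> S \<and> insert t (fst (lng_st C S T \<pi> n)) \<subseteq> win_set T \<pi> s)
    in (insert t (fst (lng_st C S T \<pi> n)), snd (lng_st C S T \<pi> n) \<union> win_set T \<pi> s))"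

lemma not_LNG_free:
  assumes fin: "\<forall>s\<in>S. finite (win_set T \<pi> s)" and C: "C \<subseteq> T" "infinite C"
    and cv: "\<forall>D. finite D \<and> D \<subseteq> C \<longrightarrow> cov S T \<pi> D"
  shows "\<not> LNG_free S T \<pi>"
proof -
  define W where "W = win_set T \<pi>"
  define st where "st = lng_st C S T \<pi>"
  define tt where "tt n = (SOME t. t \<in> C - snd (st n))" for n
  define ss where "ss n = (SOME s. s \<in> S \<and> insert (tt n) (fst (st n)) \<subseteq> W s)" for n
  have stS: "st (Suc n) = (insert (tt n) (fst (st n)), snd (st n) \<union> W (ss n))" for n
    by (simp add: st_def tt_def ss_def W_def Let_def)
  have P: "fst (st n) = tt ` {..<n} \<and> snd (st n) = (\<Union>i<n. W (ss i)) \<and>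
      (\<forall>i<n. ss i \<in> S \<and> tt i \<in> C - (\<Union>j<i. W (ss j)) \<and> tt ` {..i} \<subseteq> W (ss i))" for n
  proof (induction n)
    case 0
    then show ?case by (simp add: st_def)
  next
    case (Suc n)
    have fY: "finite (snd (st n))" using Suc fin by (auto simp: W_def)
    hence "C - snd (st n) \<noteq> {}" using C(2) by (metis Diff_infinite_finite empty_iff finite.emptyI)
    hence t: "tt n \<in> C - snd (st n)" unfolding tt_def by (metis ex_in_conv someI_ex)
    have "insert (tt n) (fst (st n)) \<subseteq> C" using Suc t by auto
    moreover have "finite (insert (tt n) (fst (st n)))" using Suc by auto
    ultimately have "cov S T \<pi> (insert (tt n) (fst (st n)))" using cv by blast
    hence "\<exists>s. s \<in> S \<and> insert (tt n) (fst (st n)) \<subseteq> W s" by (auto simp: cov_def W_def)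
    hence s: "ss n \<in> S \<and> insert (tt n) (fst (st n)) \<subseteq> W (ss n)" unfolding ss_def by (rule someI_ex)
    have e1: "tt ` {..<Suc n} = insert (tt n) (tt ` {..<n})" by (simp add: lessThan_Suc)
    have e2: "(\<Union>i<Suc n. W (ss i)) = (\<Union>i<n. W (ss i)) \<union> W (ss n)" by (auto simp: lessThan_Suc)
    have e3: "tt ` {..n} = insert (tt n) (tt ` {..<n})" by (auto simp: lessThan_Suc_atMost[symmetric] lessThan_Suc)
    show ?case
    proof (intro conjI)
      show "fst (st (Suc n)) = tt ` {..<Suc n}" using Suc by (simp add: stS e1)
      show "snd (st (Suc n)) = (\<Union>i<Suc n. W (ss i))" using Suc by (simp add: stS e2)
      show "\<forall>i<Suc n. ss i \<in> S \<and> tt i \<in> C - (\<Union>j<i. W (ss j)) \<and> tt ` {..i} \<subseteq> W (ss i)"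
      proof (intro allI impI)
        fix i assume "i < Suc n"
        then consider "i < n" | "i = n" by linarith
        then show "ss i \<in> S \<and> tt i \<in> C - (\<Union>j<i. W (ss j)) \<and> tt ` {..i} \<subseteq> W (ss i)"
        proof cases
          case 1 then show ?thesis using Suc by blast
        next
          case 2 then show ?thesis using Suc s t e3 by simp
        qed
      qed
    qed
  qed
  have A: "ss i \<in> S \<and> tt i \<in> C - (\<Union>j<i. W (ss j)) \<and> tt ` {..i} \<subseteq> W (ss i)" for i
    using P[of "Suc i"] by blast
  have key: "\<pi> (ss i) (tt j) \<longleftrightarrow> j \<le> i" for i j
  proof
    assume "\<pi> (ss i) (tt j)"
    show "j \<le> i"
    proof (rule ccontr)
      assume "\<not> j \<le> i"
      hence "tt j \<notin> W (ss i)" using A[of j] by auto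
      moreover have "tt j \<in> T" using A[of j] C(1) by auto
      ultimately show False using \<open>\<pi> (ss i) (tt j)\<close> by (simp add: W_def win_set_def)
    qed
  next
    assume "j \<le> i"
    hence "tt j \<in> W (ss i)" using A[of i] by auto
    thus "\<pi> (ss i) (tt j)" by (simp add: W_def win_set_def)
  qed
  have "inj tt"
  proof (rule injI)
    fix i j assume e: "tt i = tt j"
    have "j \<le> i" using key[of i i] key[of i j] e by simp
    moreover have "i \<le> j" using key[of j j] key[of j i] e by simp
    ultimately show "i = j" by simp
  qed
  moreover have "inj ss"
  proof (rule injI)
    fix i j assume e: "ss i = ss j"
    have "j \<le> i" using key[of j j] key[of i j] e by simp
    moreover have "i \<le> j" using key[of i i] key[of j i] e by simp
    ultimately show "i = j" by simp
  qed
  moreover have "range ss \<subseteq> S" using A by auto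
  moreover have "range tt \<subseteq> T" using A C(1) by auto
  ultimately show ?thesis unfolding LNG_free_def using key by blast
qed

lemma wf_Rel:
  assumes fin: "\<forall>s\<in>S. finite (win_set T \<pi> s)"
    and cond: "ascending_union_closed (B1_down S T \<pi>) \<or> no_strict_ascending_chain (B1_down S T \<pi>)
         \<or> LNG_free S T \<pi>"
  shows "wf (Rel S T \<pi>)"
proof (rule ccontr)
  assume "\<not> wf (Rel S T \<pi>)"
  then obtain f where f: "\<forall>i. (f (Suc i), f i) \<in> Rel S T \<pi>"
    unfolding wf_iff_no_infinite_down_chain by blast
  define A where "A i = f (Suc i)" for i
  have strict: "A i \<subset> A (Suc i)" for i using f[rule_format, of "Suc i"] by (simp add: A_def Rel_def)
  have covA: "cov S T \<pi> (A i)" for i using f[rule_format, of i] by (simp add: A_def Rel_def)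
  have finA: "finite (A i)" for i using covA[of i] fin by (auto simp: cov_def intro: finite_subset)
  have inB: "A i \<in> B1_down S T \<pi>" for i using covA[of i]
    by (auto simp: cov_def B1_down_def win_set_def)
  have mono: "i \<le> j \<Longrightarrow> A i \<subseteq> A j" for i j
    using lift_Suc_mono_le[of A i j] strict by blast
  have cardA: "card (A i) \<ge> i" for i
  proof (induction i)
    case 0 then show ?case by simp
  next
    case (Suc i) then show ?case using psubset_card_mono[OF finA strict[of i]] by simp
  qed
  have infU: "infinite (\<Union>i. A i)"
  proof
    assume fU: "finite (\<Union>i. A i)"
    have "card (A (Suc (card (\<Union>i. A i)))) \<le> card (\<Union>i. A i)"
      by (rule card_mono[OF fU]) auto
    thus False using cardA[of "Suc (card (\<Union>i. A i))"] by simp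
  qed
  have finsub: "finite D \<Longrightarrow> D \<subseteq> (\<Union>i. A i) \<Longrightarrow> \<exists>i. D \<subseteq> A i" for D
  proof (induction D rule: finite_induct)
    case empty then show ?case by simp
  next
    case (insert x D)
    then obtain i j where "D \<subseteq> A i" "x \<in> A j" by auto
    hence "insert x D \<subseteq> A (max i j)" using mono[of i "max i j"] mono[of j "max i j"] by auto
    then show ?case by blast
  qed
  consider "ascending_union_closed (B1_down S T \<pi>)" | "no_strict_ascending_chain (B1_down S T \<pi>)"
    | "LNG_free S T \<pi>" using cond by blast
  then show False
  proof cases
    case 1
    hence "(\<Union>i. A i) \<in> B1_down S T \<pi>" unfolding ascending_union_closed_def using inB strict by blast
    then obtain s where "s \<in> S" "(\<Union>i. A i) \<subseteq> win_set T \<pi> s" by (auto simp: B1_down_def)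
    then show False using fin infU finite_subset by blast
  next
    case 2 then show False unfolding no_strict_ascending_chain_def using inB strict by blast
  next
    case 3
    have CT: "(\<Union>i. A i) \<subseteq> T" using inB by (auto simp: B1_down_def)
    have "\<forall>D. finite D \<and> D \<subseteq> (\<Union>i. A i) \<longrightarrow> cov S T \<pi> D"
      using finsub covA by (meson cov_def order_trans)
    then show False using not_LNG_free[OF fin CT infU] 3 by blast
  qed
qed


lemma measure_mix:
  fixes Q :: "nat \<Rightarrow> 'b pmf"
  assumes "n > 0"
  shows "measure (bind_pmf (pmf_of_set {..<n}) Q) A = (\<Sum>i<n. measure (Q i) A) / real n"
proof -
  have ne: "{..<n} \<noteq> {}" using assms by auto
  have "emeasure (measure_pmf (bind_pmf (pmf_of_set {..<n}) Q)) A
      = (\<integral>\<^sup>+i. emeasure (measure_pmf (Q i)) A \<partial>measure_pmf (pmf_of_set {..<n}))" by simp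
  also have "\<dots> = (\<Sum>i<n. emeasure (measure_pmf (Q i)) A) / of_nat (card {..<n::nat})"
    using nn_integral_pmf_of_set[OF ne finite_lessThan] by simp
  also have "\<dots> = (\<Sum>i<n. ennreal (measure (Q i) A)) / ennreal (real n)"
    by (simp add: measure_pmf.emeasure_eq_measure ennreal_of_nat_eq_real_of_nat)
  also have "\<dots> = ennreal ((\<Sum>i<n. measure (Q i) A) / real n)"
    using assms by (simp add: sum_ennreal divide_ennreal sum_nonneg)
  finally show ?thesis
    by (simp add: measure_pmf.emeasure_eq_measure sum_nonneg)
qed


definition good :: "'a set \<Rightarrow> 'b set \<Rightarrow> ('a \<Rightarrow> 'b \<Rightarrow> bool) \<Rightarrow> 'b set set \<Rightarrow> 'b set \<Rightarrow> real \<Rightarrow> 'b pmf \<Rightarrow> bool" where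
  "good S T \<pi> G X \<epsilon> q \<longleftrightarrow> finite (set_pmf q) \<and> set_pmf q \<subseteq> T - X \<and>
     (\<forall>F\<in>G. \<forall>s\<in>S. F \<subseteq> win_set T \<pi> s \<longrightarrow> measure q (win_set T \<pi> s) \<le> \<epsilon>)"

lemma main_claim:
  fixes S :: "'a set" and T :: "'b set" and G :: "'b set set" and X :: "'b set" and \<epsilon> :: real
  assumes wf: "wf (Rel S T \<pi>)" and fin: "\<forall>s\<in>S. finite (win_set T \<pi> s)" and Tinf: "infinite T"
  shows "finite G \<Longrightarrow> finite X \<Longrightarrow> \<epsilon> > 0 \<Longrightarrow> \<exists>q. good S T \<pi> G X \<epsilon> q"
proof -
  define W where "W = win_set T \<pi>"
  have main: "\<forall>G :: 'b set set. finite G \<longrightarrow> mset_set G = M \<longrightarrow> (\<forall>(X :: 'b set) \<epsilon>. finite X \<longrightarrow> \<epsilon> > 0 \<longrightarrow> (\<exists>q. good S T \<pi> G X \<epsilon> q))" for M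
  proof (induction M rule: wf_induct_rule[OF wf_mult[OF wf]])
    case (1 M)
    show ?case
    proof (intro allI impI)
      fix G :: "'b set set" and X :: "'b set" and \<epsilon> :: real assume G: "finite G" "mset_set G = M" and X: "finite X" and \<epsilon>: "\<epsilon> > 0"
      show "\<exists>q. good S T \<pi> G X \<epsilon> q"
      proof (cases "G = {}")
        case True
        obtain t where t: "t \<in> T - X" using Tinf X by (metis Diff_infinite_finite ex_in_conv finite.emptyI)
        show ?thesis using True t by (intro exI[of _ "return_pmf t"]) (simp add: good_def)
      next
        case False
        define X' where "X' = X \<union> \<Union>{F\<in>G. cov S T \<pi> F}"
        have fX': "finite X'" unfolding X'_def using X G(1) fin
          by (auto simp: cov_def intro: finite_subset)
        obtain n0 :: nat where n0: "inverse (real (Suc n0)) < \<epsilon>/2" using reals_Archimedean[of "\<epsilon>/2"] \<epsilon> by auto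
        define n where "n = Suc n0"
        have n: "n > 0" "1 / real n \<le> \<epsilon>/2" using n0 by (auto simp: n_def inverse_eq_divide)
        define Gi where "Gi Q i = {insert m F | F m. F \<in> G \<and> cov S T \<pi> F \<and> m \<in> (\<Union>j<i. set_pmf (Q j)) \<and> cov S T \<pi> (insert m F)}"
          for Q :: "nat \<Rightarrow> 'b pmf" and i
        have build: "\<exists>Q. \<forall>i<k. good S T \<pi> (Gi Q i) X' (\<epsilon>/2) (Q i)" for k
        proof (induction k)
          case 0 show ?case by simp
        next
          case (Suc k)
          then obtain Q where Q: "\<forall>i<k. good S T \<pi> (Gi Q i) X' (\<epsilon>/2) (Q i)" by blast
          have "Gi Q k \<subseteq> (\<lambda>(F,m). insert m F) ` (G \<times> (\<Union>j<k. set_pmf (Q j)))"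
            unfolding Gi_def by auto
          moreover have "finite (G \<times> (\<Union>j<k. set_pmf (Q j)))"
            using Q G(1) by (auto simp: good_def)
          ultimately have finGi: "finite (Gi Q k)" by (meson finite_imageI finite_subset)
          have "(mset_set (Gi Q k), M) \<in> mult (Rel S T \<pi>)"
          proof -
            have "({#} + mset_set (Gi Q k), {#} + mset_set G) \<in> mult (Rel S T \<pi>)"
            proof (rule one_step_implies_mult)
              show "mset_set G \<noteq> {#}" using False G(1) by (simp add: mset_set_empty_iff)
              show "\<forall>k'\<in>#mset_set (Gi Q k). \<exists>j\<in>#mset_set G. (k', j) \<in> Rel S T \<pi>"
              proof
                fix k' assume "k' \<in># mset_set (Gi Q k)"
                hence "k' \<in> Gi Q k" using finGi by simp
                then obtain F m j where Fm: "k' = insert m F" "F \<in> G" "cov S T \<pi> F" "j < k"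
                  "m \<in> set_pmf (Q j)" "cov S T \<pi> (insert m F)" unfolding Gi_def by blast
                have "m \<notin> X'" using Q Fm by (auto simp: good_def)
                hence "m \<notin> F" using Fm unfolding X'_def by blast
                hence "(k', F) \<in> Rel S T \<pi>" using Fm by (auto simp: Rel_def)
                thus "\<exists>j\<in>#mset_set G. (k', j) \<in> Rel S T \<pi>" using Fm G(1) by auto
              qed
            qed
            thus ?thesis using G(2) by simp
          qed
          then obtain q where q: "good S T \<pi> (Gi Q k) X' (\<epsilon>/2) q"
            using "1"[rule_format, OF _ finGi refl fX'] \<epsilon> by fastforce
          define Q' where "Q' = Q(k := q)"
          have GQ': "Gi Q' i = Gi Q i" if "i \<le> k" for i
            unfolding Gi_def Q'_def using that by (intro Collect_cong) auto
          show ?case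
          proof (intro exI[of _ Q'] allI impI)
            fix i assume "i < Suc k"
            then consider "i < k" | "i = k" by linarith
            then show "good S T \<pi> (Gi Q' i) X' (\<epsilon>/2) (Q' i)"
            proof cases
              case 1 then show ?thesis using Q GQ'[of i] by (simp add: Q'_def)
            next
              case 2 then show ?thesis using q GQ'[of i] by (simp add: Q'_def)
            qed
          qed
        qed
        obtain Q where Q: "\<forall>i<n. good S T \<pi> (Gi Q i) X' (\<epsilon>/2) (Q i)" using build by blast
        define q where "q = bind_pmf (pmf_of_set {..<n}) Q"
        have sq: "set_pmf q = (\<Union>i<n. set_pmf (Q i))" proof -
          have "{..<n} \<noteq> {}" using n by auto
          thus ?thesis by (simp add: q_def set_pmf_of_set[OF _ finite_lessThan])
        qed
        show ?thesis
        proof (intro exI[of _ q])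
          show "good S T \<pi> G X \<epsilon> q"
            unfolding good_def
          proof (intro conjI ballI impI)
            show "finite (set_pmf q)" using sq Q by (auto simp: good_def)
            show "set_pmf q \<subseteq> T - X" using sq Q by (auto simp: good_def X'_def)
            fix F s assume F: "F \<in> G" and s: "s \<in> S" and Fs: "F \<subseteq> win_set T \<pi> s"
            have covF: "cov S T \<pi> F" using s Fs by (auto simp: cov_def)
            define f where "f i = measure (Q i) (win_set T \<pi> s)" for i
            have f01: "0 \<le> f i" "f i \<le> 1" for i by (simp_all add: f_def)
            have f0: "f i = 0" if "win_set T \<pi> s \<inter> set_pmf (Q i) = {}" for i
              using that measure_Int_set_pmf[of "Q i" "win_set T \<pi> s"] by (simp add: f_def)
            have sumle: "(\<Sum>i<n. f i) \<le> 1 + real n * (\<epsilon>/2)"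
            proof (cases "\<exists>i<n. win_set T \<pi> s \<inter> set_pmf (Q i) \<noteq> {}")
              case False
              hence "(\<Sum>i<n. f i) = 0" using f0 by simp
              then show ?thesis using \<epsilon> by simp
            next
              case True
              define J where "J = {i. i < n \<and> win_set T \<pi> s \<inter> set_pmf (Q i) \<noteq> {}}"
              have fJ: "finite J" "J \<noteq> {}" using True by (auto simp: J_def)
              define j where "j = Min J"
              have jJ: "j \<in> J" using fJ by (simp add: j_def)
              have jmin: "\<And>i. i \<in> J \<Longrightarrow> j \<le> i" using fJ by (simp add: j_def)
              obtain m where m: "m \<in> win_set T \<pi> s" "m \<in> set_pmf (Q j)" using jJ by (auto simp: J_def)
              have small: "f i \<le> \<epsilon>/2" if "i < n" "i \<noteq> j" for i
              proof (cases "i \<in> J")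
                case False
                then show ?thesis using f0[of i] that \<epsilon> by (auto simp: J_def)
              next
                case True
                hence "j < i" using jmin[of i] that by simp
                hence "insert m F \<in> Gi Q i" unfolding Gi_def
                  using F covF m Fs s by (auto simp: cov_def)
                moreover have "insert m F \<subseteq> win_set T \<pi> s" using m Fs by simp
                ultimately show ?thesis using Q that s unfolding good_def f_def by blast
              qed
              have jn: "j < n" using jJ by (simp add: J_def)
              have "(\<Sum>i<n. f i) = f j + (\<Sum>i\<in>{..<n}-{j}. f i)"
                using jn by (simp add: sum.remove)
              also have "\<dots> \<le> 1 + (\<Sum>i\<in>{..<n}-{j}. \<epsilon>/2)"
                using f01 small by (intro add_mono sum_mono) auto
              also have "\<dots> \<le> 1 + real n * (\<epsilon>/2)"
                using jn \<epsilon> by simp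
              finally show ?thesis .
            qed
            have "measure q (win_set T \<pi> s) = (\<Sum>i<n. f i) / real n"
              unfolding q_def f_def by (rule measure_mix[OF n(1)])
            also have "\<dots> \<le> (1 + real n * (\<epsilon>/2)) / real n"
              using sumle n by (simp add: divide_right_mono)
            also have "\<dots> = 1 / real n + \<epsilon>/2" using n by (simp add: field_simps)
            also have "\<dots> \<le> \<epsilon>" using n by simp
            finally show "measure q (win_set T \<pi> s) \<le> \<epsilon>" .
          qed
        qed
      qed
    qed
  qed
  assume "finite G" "finite X" "\<epsilon> > 0"
  thus "\<exists>q. good S T \<pi> G X \<epsilon> q" using main by blast
qed


lemma attain:
  fixes q :: "'b pmf" and S :: "'a set"
  assumes wf: "wf (Rel S T \<pi>)"
  shows "cov S T \<pi> F \<Longrightarrow> \<exists>s0\<in>S. F \<subseteq> win_set T \<pi> s0 \<and>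
           (\<forall>s\<in>S. F \<subseteq> win_set T \<pi> s \<longrightarrow> measure q (win_set T \<pi> s) \<le> measure q (win_set T \<pi> s0))"
proof (induction F rule: wf_induct_rule[OF wf])
  case (1 F)
  define W where "W = win_set T \<pi>"
  define \<mu> where "\<mu> s = measure q (W s)" for s
  define V where "V = \<mu> ` {s\<in>S. F \<subseteq> W s}"
  have Vne: "V \<noteq> {}" using "1.prems" by (auto simp: V_def cov_def W_def)
  have Vbdd: "bdd_above V" unfolding V_def \<mu>_def by (rule bdd_aboveI[of _ 1]) auto
  define M where "M = Sup V"
  have upper: "\<mu> s \<le> M" if "s \<in> S" "F \<subseteq> W s" for s
    unfolding M_def using that Vbdd by (intro cSup_upper) (auto simp: V_def)
  show ?case
  proof (rule ccontr)
    assume na: "\<not> ?case"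
    have lessM: "\<mu> s < M" if "s \<in> S" "F \<subseteq> W s" for s
    proof -
      have "\<exists>s'\<in>S. F \<subseteq> W s' \<and> \<mu> s' > \<mu> s" using na that
        unfolding W_def \<mu>_def by (meson not_le)
      then obtain s' where "s' \<in> S" "F \<subseteq> W s'" "\<mu> s' > \<mu> s" by blast
      thus ?thesis using upper by fastforce
    qed
    obtain s1 where s1: "s1 \<in> S" "F \<subseteq> W s1" using "1.prems" by (auto simp: cov_def W_def)
    have qF: "measure q F \<le> \<mu> s" if "F \<subseteq> W s" for s
      unfolding \<mu>_def using that by (intro measure_pmf.finite_measure_mono) auto
    define \<delta> where "\<delta> = M - measure q F"
    have \<delta>: "\<delta> > 0" using qF[OF s1(2)] lessM[OF s1] by (simp add: \<delta>_def)
    obtain K where K: "finite K" "measure q (- K) < \<delta>/2" using finite_approx[of "\<delta>/2" q] \<delta> by auto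
    define Km where "Km = {m \<in> K. m \<notin> F \<and> cov S T \<pi> (insert m F)}"
    have "\<forall>m\<in>Km. \<exists>s0\<in>S. insert m F \<subseteq> W s0 \<and> (\<forall>s\<in>S. insert m F \<subseteq> W s \<longrightarrow> \<mu> s \<le> \<mu> s0)"
    proof
      fix m assume m: "m \<in> Km"
      hence "(insert m F, F) \<in> Rel S T \<pi>" by (auto simp: Km_def Rel_def)
      thus "\<exists>s0\<in>S. insert m F \<subseteq> W s0 \<and> (\<forall>s\<in>S. insert m F \<subseteq> W s \<longrightarrow> \<mu> s \<le> \<mu> s0)"
        using "1.IH"[of "insert m F"] m unfolding Km_def W_def \<mu>_def by blast
    qed
    then obtain sm where sm: "\<And>m. m \<in> Km \<Longrightarrow> sm m \<in> S \<and> insert m F \<subseteq> W (sm m) \<and>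
        (\<forall>s\<in>S. insert m F \<subseteq> W s \<longrightarrow> \<mu> s \<le> \<mu> (sm m))" by metis
    define \<eta> where "\<eta> = Min (insert (\<delta>/2) ((\<lambda>m. M - \<mu> (sm m)) ` Km))"
    have fKm: "finite Km" using K(1) by (simp add: Km_def)
    have \<eta>pos: "\<eta> > 0"
      unfolding \<eta>_def using fKm \<delta> lessM sm by (auto simp: Min_gr_iff)
    have \<eta>le: "\<eta> \<le> \<delta>/2" "\<And>m. m \<in> Km \<Longrightarrow> \<eta> \<le> M - \<mu> (sm m)"
    proof -
      show "\<eta> \<le> \<delta>/2" unfolding \<eta>_def using fKm by (intro Min_le) auto
      show "\<eta> \<le> M - \<mu> (sm m)" if "m \<in> Km" for m
        unfolding \<eta>_def using fKm that by (intro Min_le) auto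
    qed
    have "M - \<eta> < Sup V" using \<eta>pos by (simp add: M_def)
    then obtain v where "v \<in> V" "M - \<eta> < v" using less_cSup_iff[OF Vne Vbdd] by blast
    then obtain s where s: "s \<in> S" "F \<subseteq> W s" "\<mu> s > M - \<eta>" by (auto simp: V_def)
    have "measure q (W s - F) = \<mu> s - measure q F"
      unfolding \<mu>_def using s(2) by (simp add: measure_pmf.finite_measure_Diff)
    also have "\<dots> > \<delta>/2" using s(3) \<eta>le(1) by (simp add: \<delta>_def)
    finally have big: "measure q (W s - F) > measure q (- K)" using K(2) by simp
    have "\<not> (W s - F \<subseteq> - K)"
    proof
      assume "W s - F \<subseteq> - K"
      hence "measure q (W s - F) \<le> measure q (- K)" by (intro measure_pmf.finite_measure_mono) auto
      thus False using big by simp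
    qed
    then obtain m where m: "m \<in> W s" "m \<notin> F" "m \<in> K" by auto
    have "cov S T \<pi> (insert m F)" using m s by (auto simp: cov_def W_def)
    hence mKm: "m \<in> Km" using m by (simp add: Km_def)
    have "\<mu> s \<le> \<mu> (sm m)" using sm[OF mKm] s m by auto
    also have "\<dots> \<le> M - \<eta>" using \<eta>le(2)[OF mKm] by simp
    finally show False using s(3) by simp
  qed
qed

lemma measure_win:
  fixes q :: "'b pmf"
  assumes "set_pmf q \<subseteq> T"
  shows "measure q {t. \<pi> s t} = measure q (win_set T \<pi> s)"
proof -
  have "{t. \<pi> s t} \<inter> set_pmf q = win_set T \<pi> s \<inter> set_pmf q" using assms by (auto simp: win_set_def)
  thus ?thesis by (metis measure_Int_set_pmf)
qed

lemma le_zero_eps: "(\<And>\<epsilon>. \<epsilon> > 0 \<Longrightarrow> (x::real) \<le> \<epsilon>) \<Longrightarrow> x \<le> 0"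
  by (metis field_lbound_gt_zero less_eq_real_def less_numeral_extra(1) not_le)

theorem corollary2p10:
  fixes S :: "'a set" and T :: "'b set" and \<pi> :: "'a \<Rightarrow> 'b \<Rightarrow> bool"
  assumes "countable_game S T"
    and "\<forall>B\<in>B1 S T \<pi>. finite B"
    and "ascending_union_closed (B1_down S T \<pi>) \<or> no_strict_ascending_chain (B1_down S T \<pi>)
         \<or> LNG_free S T \<pi>"
  shows "(\<exists>p0\<in>Delta S. (INF q\<in>Delta T. pi_mix \<pi> p0 q) = (SUP p\<in>Delta S. INF q\<in>Delta T. pi_mix \<pi> p q))
    \<and> (SUP p\<in>Delta S. INF q\<in>Delta T. pi_mix \<pi> p q) = 0
    \<and> (\<forall>q\<in>Delta T. \<exists>p0\<in>Delta S. pi_mix \<pi> p0 q = (SUP p\<in>Delta S. pi_mix \<pi> p q))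
    \<and> (INF q\<in>Delta T. SUP p\<in>Delta S. pi_mix \<pi> p q) = 0"
proof -
  have fin: "\<forall>s\<in>S. finite (win_set T \<pi> s)" using assms(2) by (simp add: B1_def)
  have Tinf: "infinite T" and Sinf: "infinite S" using assms(1) by (auto simp: countable_game_def)
  obtain s0 where s0: "s0 \<in> S" using Sinf by (metis ex_in_conv finite.emptyI)
  obtain t0 where t0: "t0 \<in> T" using Tinf by (metis ex_in_conv finite.emptyI)
  have wf: "wf (Rel S T \<pi>)" using wf_Rel[OF fin assms(3)] .
  have DS: "return_pmf s0 \<in> Delta S" using s0 by (simp add: Delta_def)
  have DT: "return_pmf t0 \<in> Delta T" using t0 by (simp add: Delta_def)
  have bddb: "bdd_below ((\<lambda>q. pi_mix \<pi> p q) ` A)" for p A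
    by (rule bdd_belowI[of _ 0]) (auto simp: pi_mix_nonneg)
  have pi1: "pi_mix \<pi> p q \<le> 1" if "p \<in> Delta S" for p q
    using that by (intro pi_mix_le[of p S]) (auto simp: Delta_def)
  have bdda: "bdd_above ((\<lambda>p. pi_mix \<pi> p q) ` Delta S)" for q
    by (rule bdd_aboveI[of _ 1]) (auto simp: pi1)
  have A: "(INF q\<in>Delta T. pi_mix \<pi> p q) = 0" if p: "p \<in> Delta S" for p
  proof (rule antisym)
    show "0 \<le> (INF q\<in>Delta T. pi_mix \<pi> p q)"
      using DT by (intro cINF_greatest) (auto simp: pi_mix_nonneg)
    show "(INF q\<in>Delta T. pi_mix \<pi> p q) \<le> 0"
    proof (rule le_zero_eps)
      fix \<epsilon> :: real assume \<epsilon>: "\<epsilon> > 0"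
      obtain K where K: "finite K" "measure p (- K) < \<epsilon>" using finite_approx[OF \<epsilon>] by blast
      define U where "U = \<Union>(win_set T \<pi> ` (K \<inter> S))"
      have "finite U" using K(1) fin by (simp add: U_def)
      then obtain t where t: "t \<in> T - U" using Tinf by (metis Diff_infinite_finite ex_in_conv finite.emptyI)
      have sub: "{s. \<pi> s t} \<inter> set_pmf p \<subseteq> - K"
        using t p by (auto simp: U_def Delta_def win_set_def)
      have "pi_mix \<pi> p (return_pmf t) = measure p ({s. \<pi> s t} \<inter> set_pmf p)"
        by (simp add: pi_mix_ret_right measure_Int_set_pmf)
      also have "\<dots> \<le> measure p (- K)" using sub by (intro measure_pmf.finite_measure_mono) auto
      finally have lt: "pi_mix \<pi> p (return_pmf t) \<le> \<epsilon>" using K(2) by simp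
      have "(INF q\<in>Delta T. pi_mix \<pi> p q) \<le> pi_mix \<pi> p (return_pmf t)"
        using t by (intro cINF_lower bddb) (auto simp: Delta_def)
      thus "(INF q\<in>Delta T. pi_mix \<pi> p q) \<le> \<epsilon>" using lt by simp
    qed
  qed
  have SUP0: "(SUP p\<in>Delta S. INF q\<in>Delta T. pi_mix \<pi> p q) = 0"
  proof -
    have "(SUP p\<in>Delta S. INF q\<in>Delta T. pi_mix \<pi> p q) = (SUP p\<in>Delta S. (0::real))"
      using A by (intro SUP_cong) auto
    also have "\<dots> = 0" by (metis DS cSUP_const empty_iff)
    finally show ?thesis .
  qed
  have C3: "\<forall>q\<in>Delta T. \<exists>p0\<in>Delta S. pi_mix \<pi> p0 q = (SUP p\<in>Delta S. pi_mix \<pi> p q)"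
  proof
    fix q assume q: "q \<in> Delta T"
    have "cov S T \<pi> {}" using s0 by (auto simp: cov_def)
    then obtain s1 where s1: "s1 \<in> S" "\<forall>s\<in>S. measure q (win_set T \<pi> s) \<le> measure q (win_set T \<pi> s1)"
      using attain[OF wf, of "{}" q] by auto
    have qT: "set_pmf q \<subseteq> T" using q by (simp add: Delta_def)
    have r: "pi_mix \<pi> (return_pmf s1) q = measure q (win_set T \<pi> s1)"
      by (simp add: pi_mix_ret_left measure_win[OF qT])
    have "(SUP p\<in>Delta S. pi_mix \<pi> p q) = measure q (win_set T \<pi> s1)"
    proof (rule antisym)
      show "(SUP p\<in>Delta S. pi_mix \<pi> p q) \<le> measure q (win_set T \<pi> s1)"
      proof (rule cSUP_least)
        show "Delta S \<noteq> {}" using DS by auto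
        fix p assume "p \<in> Delta S"
        thus "pi_mix \<pi> p q \<le> measure q (win_set T \<pi> s1)"
          using s1(2) by (intro pi_mix_le[of p S]) (auto simp: Delta_def measure_win[OF qT])
      qed
      show "measure q (win_set T \<pi> s1) \<le> (SUP p\<in>Delta S. pi_mix \<pi> p q)"
        using s1(1) r by (metis (no_types, lifting) cSUP_upper bdda Delta_def mem_Collect_eq
            set_return_pmf empty_subsetI insert_subset)
    qed
    thus "\<exists>p0\<in>Delta S. pi_mix \<pi> p0 q = (SUP p\<in>Delta S. pi_mix \<pi> p q)"
      using r s1(1) by (intro bexI[of _ "return_pmf s1"]) (auto simp: Delta_def)
  qed
  have C4: "(INF q\<in>Delta T. SUP p\<in>Delta S. pi_mix \<pi> p q) = 0"
  proof (rule antisym)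
    have "0 \<le> (SUP p\<in>Delta S. pi_mix \<pi> p q)" for q
      using DS by (intro cSUP_upper2[OF bdda DS]) (auto simp: pi_mix_nonneg)
    thus "0 \<le> (INF q\<in>Delta T. SUP p\<in>Delta S. pi_mix \<pi> p q)"
      using DT by (intro cINF_greatest) auto
    show "(INF q\<in>Delta T. SUP p\<in>Delta S. pi_mix \<pi> p q) \<le> 0"
    proof (rule le_zero_eps)
      fix \<epsilon> :: real assume \<epsilon>: "\<epsilon> > 0"
      obtain q where q: "good S T \<pi> {{}} {} \<epsilon> q"
        using main_claim[OF wf fin Tinf, of "{{}}" "{}" \<epsilon>] \<epsilon> by auto
      have qT: "set_pmf q \<subseteq> T" and qs: "\<forall>s\<in>S. measure q (win_set T \<pi> s) \<le> \<epsilon>"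
        using q by (auto simp: good_def)
      have le: "(SUP p\<in>Delta S. pi_mix \<pi> p q) \<le> \<epsilon>"
      proof (rule cSUP_least)
        show "Delta S \<noteq> {}" using DS by auto
        fix p assume "p \<in> Delta S"
        thus "pi_mix \<pi> p q \<le> \<epsilon>"
          using qs by (intro pi_mix_le[of p S]) (auto simp: Delta_def measure_win[OF qT])
      qed
      have bb: "bdd_below ((\<lambda>q. SUP p\<in>Delta S. pi_mix \<pi> p q) ` Delta T)"
        by (rule bdd_belowI[of _ 0]) (use \<open>\<And>q. 0 \<le> (SUP p\<in>Delta S. pi_mix \<pi> p q)\<close> in auto)
      have "(INF q\<in>Delta T. SUP p\<in>Delta S. pi_mix \<pi> p q) \<le> (SUP p\<in>Delta S. pi_mix \<pi> p q)"
        using qT by (intro cINF_lower bb) (auto simp: Delta_def)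
      thus "(INF q\<in>Delta T. SUP p\<in>Delta S. pi_mix \<pi> p q) \<le> \<epsilon>" using le by simp
    qed
  qed
  show ?thesis using SUP0 C3 C4 A DS by auto
qed

end
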